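(* Let $I$ be a squarefree monomial ideal in a polynomial ring $S$ over a field that is nearly a complete intersection (NCI). If $m_1$ and $m_2$ are two distinct minimal monomial generators of $I$, then $\gcd(m_1,m_2)$ has degree at most $1$.
   Context: An ideal is a complete intersection (CI) if it is generated by a regular sequence. The support of a monomial ideal is the set of variables appearing in at least one minimal monomial generator. For a squarefree monomial ideal $I$ and a variable $x$, $I(x=1)$ denotes the ideal generated by the monomials obtained from the minimal monomial generators of $I$ by setting $x = 1$. A squarefree monomial ideal $I$ is NCI if it is generated in degree at least two, is not a CI, and for each variable $x$ in the support of $I$, $I(x=1)$ is a CI. *)

theory Defs
  imports "HOL-Library.Poly_Mapping"
begin

(* Polynomial ring S = k[x_v : v in 'v] is modelled as finitely supported maps
   from exponent vectors to coefficients; the monomial x^a is single a 1. *)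

type_synonym ('v, 'k) mpoly = "('v \<Rightarrow>\<^sub>0 nat) \<Rightarrow>\<^sub>0 'k"

definition monom :: "('v \<Rightarrow>\<^sub>0 nat) \<Rightarrow> ('v, 'k::comm_ring_1) mpoly" where
  "monom a = Poly_Mapping.single a 1"

definition ideal_gen :: "('v, 'k::comm_ring_1) mpoly set \<Rightarrow> ('v, 'k) mpoly set" where
  "ideal_gen G = {p. \<exists>F r. finite F \<and> F \<subseteq> G \<and> p = (\<Sum>g\<in>F. r g * g)}"

definition regular_sequence :: "('v, 'k::comm_ring_1) mpoly list \<Rightarrow> bool" where
  "regular_sequence fs \<longleftrightarrow>
     (\<forall>i < length fs. \<forall>g. fs ! i * g \<in> ideal_gen (set (take i fs))
                          \<longrightarrow> g \<in> ideal_gen (set (take i fs)))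
     \<and> ideal_gen (set fs) \<noteq> UNIV"

definition is_CI :: "('v, 'k::comm_ring_1) mpoly set \<Rightarrow> bool" where
  "is_CI I \<longleftrightarrow> (\<exists>fs. regular_sequence fs \<and> I = ideal_gen (set fs))"

definition squarefree_exp :: "('v \<Rightarrow>\<^sub>0 nat) \<Rightarrow> bool" where
  "squarefree_exp a \<longleftrightarrow> (\<forall>v. Poly_Mapping.lookup a v \<le> 1)"

definition mdvd :: "('v \<Rightarrow>\<^sub>0 nat) \<Rightarrow> ('v \<Rightarrow>\<^sub>0 nat) \<Rightarrow> bool" where
  "mdvd b a \<longleftrightarrow> (\<forall>v. Poly_Mapping.lookup b v \<le> Poly_Mapping.lookup a v)"

definition mdeg :: "('v \<Rightarrow>\<^sub>0 nat) \<Rightarrow> nat" where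
  "mdeg a = (\<Sum>v\<in>Poly_Mapping.keys a. Poly_Mapping.lookup a v)"

definition mgcd :: "('v \<Rightarrow>\<^sub>0 nat) \<Rightarrow> ('v \<Rightarrow>\<^sub>0 nat) \<Rightarrow> ('v \<Rightarrow>\<^sub>0 nat)" where
  "mgcd a b = Abs_poly_mapping (\<lambda>v. min (Poly_Mapping.lookup a v) (Poly_Mapping.lookup b v))"

definition squarefree_monomial_ideal :: "('v, 'k::comm_ring_1) mpoly set \<Rightarrow> bool" where
  "squarefree_monomial_ideal I \<longleftrightarrow>
     (\<exists>A. (\<forall>a\<in>A. squarefree_exp a) \<and> I = ideal_gen (monom ` A))"

definition min_gens :: "('v, 'k::comm_ring_1) mpoly set \<Rightarrow> ('v \<Rightarrow>\<^sub>0 nat) set" where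
  "min_gens I = {a. monom a \<in> I \<and> (\<forall>b. monom b \<in> I \<and> mdvd b a \<longrightarrow> b = a)}"

definition ideal_support :: "('v, 'k::comm_ring_1) mpoly set \<Rightarrow> 'v set" where
  "ideal_support I = (\<Union>a\<in>min_gens I. Poly_Mapping.keys a)"

text \<open>I(x=1): generated by the minimal generators of I with x set to 1.\<close>
definition set_var_one :: "('v, 'k::comm_ring_1) mpoly set \<Rightarrow> 'v \<Rightarrow> ('v, 'k) mpoly set" where
  "set_var_one I x = ideal_gen ((\<lambda>a. monom (Poly_Mapping.update x 0 a)) ` min_gens I)"

definition is_NCI :: "('v, 'k::comm_ring_1) mpoly set \<Rightarrow> bool" where
  "is_NCI I \<longleftrightarrow> squarefree_monomial_ideal I
     \<and> (\<forall>a\<in>min_gens I. mdeg a \<ge> 2)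
     \<and> \<not> is_CI I
     \<and> (\<forall>x\<in>ideal_support I. is_CI (set_var_one I x))"

end

theory Submission
  imports Defs
begin


lemma lookup_mult_single_right:
  fixes f :: "('v \<Rightarrow>\<^sub>0 nat) \<Rightarrow>\<^sub>0 'k::comm_ring_1"
  shows "Poly_Mapping.lookup (f * Poly_Mapping.single p c) (u + p) = Poly_Mapping.lookup f u * c"
proof -
  have inner: "\<And>l. (\<Sum>q. Poly_Mapping.lookup (Poly_Mapping.single p c) q when u + p = l + q) = (c when l = u)"
  proof -
    fix l
    have "(\<Sum>q. Poly_Mapping.lookup (Poly_Mapping.single p c) q when u + p = l + q)
        = (\<Sum>q. ((c when u + p = l + q) when q = p))"
      by (rule Sum_any.cong) (auto simp: lookup_single when_def)
    also have "\<dots> = (c when u + p = l + p)" by (rule Sum_any_when_equal)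
    also have "\<dots> = (c when l = u)" by (auto simp: when_def)
    finally show "?thesis l" .
  qed
  show ?thesis
    by (simp add: lookup_mult inner mult_when)
qed

lemma ideal_gen_base:
  fixes G :: "('v, 'k::comm_ring_1) mpoly set"
  assumes "g \<in> G" shows "g \<in> ideal_gen G"
  unfolding ideal_gen_def
  by (rule CollectI, rule exI[of _ "{g}"], rule exI[of _ "\<lambda>_. 1"]) (use assms in auto)

lemma ideal_gen_zero:
  fixes G :: "('v, 'k::comm_ring_1) mpoly set"
  shows "0 \<in> ideal_gen G"
  unfolding ideal_gen_def by (rule CollectI, rule exI[of _ "{}"]) auto

lemma ideal_gen_add:
  fixes G :: "('v, 'k::comm_ring_1) mpoly set"
  assumes "p \<in> ideal_gen G" "q \<in> ideal_gen G" shows "p + q \<in> ideal_gen G"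
proof -
  obtain F1 r1 where 1: "finite F1" "F1 \<subseteq> G" "p = (\<Sum>g\<in>F1. r1 g * g)"
    using assms(1) unfolding ideal_gen_def by blast
  obtain F2 r2 where 2: "finite F2" "F2 \<subseteq> G" "q = (\<Sum>g\<in>F2. r2 g * g)"
    using assms(2) unfolding ideal_gen_def by blast
  define r where "r g = (if g \<in> F1 then r1 g else 0) + (if g \<in> F2 then r2 g else 0)" for g
  have "(\<Sum>g\<in>F1 \<union> F2. r g * g) = (\<Sum>g\<in>F1 \<union> F2. (if g \<in> F1 then r1 g * g else 0) + (if g \<in> F2 then r2 g * g else 0))"
    by (rule sum.cong) (auto simp: r_def distrib_right)
  also have "\<dots> = (\<Sum>g\<in>F1 \<union> F2. (if g \<in> F1 then r1 g * g else 0))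
        + (\<Sum>g\<in>F1 \<union> F2. (if g \<in> F2 then r2 g * g else 0))"
    by (rule sum.distrib)
  also have "\<dots> = p + q"
  proof -
    have e1: "(\<Sum>g\<in>F1 \<union> F2. (if g \<in> F1 then r1 g * g else 0)) = (\<Sum>g\<in>F1. r1 g * g)"
    proof -
      have "(F1 \<union> F2) \<inter> F1 = F1" by blast
      then show ?thesis using 1 2 by (subst sum.inter_restrict[symmetric]) simp_all
    qed
    have e2: "(\<Sum>g\<in>F1 \<union> F2. (if g \<in> F2 then r2 g * g else 0)) = (\<Sum>g\<in>F2. r2 g * g)"
    proof -
      have "(F1 \<union> F2) \<inter> F2 = F2" by blast
      then show ?thesis using 1 2 by (subst sum.inter_restrict[symmetric]) simp_all
    qed
    show ?thesis using e1 e2 1 2 by simp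
  qed
  finally have "p + q = (\<Sum>g\<in>F1 \<union> F2. r g * g)" by simp
  moreover have "finite (F1 \<union> F2)" "F1 \<union> F2 \<subseteq> G" using 1 2 by auto
  ultimately show ?thesis unfolding ideal_gen_def
    by (intro CollectI exI[of _ "F1 \<union> F2"] exI[of _ r]) simp
qed

lemma ideal_gen_mult:
  fixes G :: "('v, 'k::comm_ring_1) mpoly set"
  assumes "p \<in> ideal_gen G" shows "c * p \<in> ideal_gen G"
proof -
  obtain F r where 1: "finite F" "F \<subseteq> G" "p = (\<Sum>g\<in>F. r g * g)"
    using assms(1) unfolding ideal_gen_def by blast
  have "c * p = (\<Sum>g\<in>F. (c * r g) * g)" using 1 by (simp add: sum_distrib_left mult.assoc)
  then show ?thesis unfolding ideal_gen_def
    using 1 by (intro CollectI exI[of _ F] exI[of _ "\<lambda>g. c * r g"]) simp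
qed

lemma ideal_gen_diff:
  fixes G :: "('v, 'k::comm_ring_1) mpoly set"
  assumes "p \<in> ideal_gen G" "q \<in> ideal_gen G" shows "p - q \<in> ideal_gen G"
  using ideal_gen_add[OF assms(1) ideal_gen_mult[OF assms(2), of "-1"]] by simp

lemma ideal_gen_sum:
  fixes G :: "('v, 'k::comm_ring_1) mpoly set"
  assumes "\<And>i. i \<in> S \<Longrightarrow> f i \<in> ideal_gen G" shows "sum f S \<in> ideal_gen G"
  using assms
proof (induction S rule: infinite_finite_induct)
  case (infinite A) then show ?case by (simp add: ideal_gen_zero)
next
  case empty then show ?case by (simp add: ideal_gen_zero)
next
  case (insert x F) then show ?case by (simp add: ideal_gen_add)
qed

lemma ideal_gen_minimal:
  fixes G :: "('v, 'k::comm_ring_1) mpoly set"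
  assumes "0 \<in> S" "\<And>a b. a \<in> S \<Longrightarrow> b \<in> S \<Longrightarrow> a + b \<in> S"
    "\<And>c a. a \<in> S \<Longrightarrow> c * a \<in> S" "G \<subseteq> S"
    "h \<in> ideal_gen G"
  shows "h \<in> S"
proof -
  obtain F r where 1: "finite F" "F \<subseteq> G" "h = (\<Sum>g\<in>F. r g * g)"
    using assms(5) unfolding ideal_gen_def by blast
  have "(\<Sum>g\<in>F. r g * g) \<in> S" using 1(1,2)
  proof (induction F rule: finite_induct)
    case empty then show ?case using assms(1) by simp
  next
    case (insert x F) then show ?case using assms(2,3,4) by auto
  qed
  then show ?thesis using 1 by simp
qed

lemma ideal_gen_mono:
  fixes G :: "('v, 'k::comm_ring_1) mpoly set"
  assumes "G \<subseteq> H" shows "ideal_gen G \<subseteq> ideal_gen H"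
  using assms unfolding ideal_gen_def by blast

lemma ideal_gen_list:
  fixes xs :: "('v, 'k::comm_ring_1) mpoly list"
  shows "h \<in> ideal_gen (set xs) \<longleftrightarrow> (\<exists>c. h = (\<Sum>k<length xs. c k * xs ! k))"
proof
  define S where "S = {h. \<exists>c. h = (\<Sum>k<length xs. c k * xs ! k)}"
  assume h: "h \<in> ideal_gen (set xs)"
  have z: "0 \<in> S" unfolding S_def mem_Collect_eq by (rule exI[of _ "\<lambda>_. 0"]) simp
  have a: "a + b \<in> S" if ab: "a \<in> S" "b \<in> S" for a b
  proof -
    obtain c1 c2 where "a = (\<Sum>k<length xs. c1 k * xs ! k)" "b = (\<Sum>k<length xs. c2 k * xs ! k)"
      using ab unfolding S_def by blast
    then have "a + b = (\<Sum>k<length xs. (c1 k + c2 k) * xs ! k)" by (simp add: distrib_right sum.distrib)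
    then show ?thesis unfolding S_def by (auto intro!: exI[of _ "\<lambda>k. c1 k + c2 k"])
  qed
  have m: "c * a \<in> S" if aS: "a \<in> S" for c a
  proof -
    obtain c1 where "a = (\<Sum>k<length xs. c1 k * xs ! k)" using aS unfolding S_def by blast
    then have "c * a = (\<Sum>k<length xs. (c * c1 k) * xs ! k)" by (simp add: sum_distrib_left mult.assoc)
    then show ?thesis unfolding S_def by (auto intro!: exI[of _ "\<lambda>k. c * c1 k"])
  qed
  have g: "set xs \<subseteq> S"
  proof
    fix g assume "g \<in> set xs"
    then obtain i where i: "i < length xs" "xs ! i = g" by (auto simp: in_set_conv_nth)
    have eq: "(\<Sum>k<length xs. (if k = i then 1 else 0) * xs ! k) = g"
    proof -
      have "(\<Sum>k<length xs. (if k = i then 1 else 0) * xs ! k) = (\<Sum>k<length xs. if k = i then xs ! k else 0)"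
        by (rule sum.cong) auto
      also have "\<dots> = xs ! i" using i by (simp add: sum.delta)
      finally show ?thesis using i by simp
    qed
    show "g \<in> S" unfolding S_def mem_Collect_eq
      by (rule exI[of _ "\<lambda>k. if k = i then 1 else 0"], rule eq[symmetric])
  qed
  have "h \<in> S" by (rule ideal_gen_minimal[OF z a m g h])
  then show "\<exists>c. h = (\<Sum>k<length xs. c k * xs ! k)" unfolding S_def by blast
next
  assume "\<exists>c. h = (\<Sum>k<length xs. c k * xs ! k)"
  then obtain c where h: "h = (\<Sum>k<length xs. c k * xs ! k)" by blast
  show "h \<in> ideal_gen (set xs)" unfolding h
    by (rule ideal_gen_sum, rule ideal_gen_mult, rule ideal_gen_base) simp
qed



lemma monomial_ideal_keys:
  fixes B :: "('v \<Rightarrow>\<^sub>0 nat) set"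
  assumes "h \<in> ideal_gen (monom ` B :: ('v, 'k::comm_ring_1) mpoly set)" "u \<in> Poly_Mapping.keys h"
  shows "\<exists>b\<in>B. mdvd b u"
proof -
  define S :: "('v, 'k) mpoly set" where "S = {h. \<forall>u\<in>Poly_Mapping.keys h. \<exists>b\<in>B. mdvd b u}"
  have z: "0 \<in> S" unfolding S_def by simp
  have a: "x + y \<in> S" if "x \<in> S" "y \<in> S" for x y
    using that keys_add[of x y] unfolding S_def by blast
  have m: "c * x \<in> S" if xS: "x \<in> S" for c x
    unfolding S_def
  proof (intro CollectI ballI)
    fix u assume "u \<in> Poly_Mapping.keys (c * x)"
    then obtain s t where st: "u = s + t" "t \<in> Poly_Mapping.keys x" using keys_mult by blast
    then obtain b where "b \<in> B" "mdvd b t" using xS unfolding S_def by blast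
    then show "\<exists>b\<in>B. mdvd b u" using st unfolding mdvd_def by (auto simp: lookup_add intro: trans_le_add2)
  qed
  have g: "monom ` B \<subseteq> S" unfolding S_def monom_def by (auto simp: mdvd_def)
  have "h \<in> S" by (rule ideal_gen_minimal[OF z a m g assms(1)])
  then show ?thesis using assms(2) unfolding S_def by blast
qed

lemma ideal_gen_split:
  fixes G :: "('v, 'k::comm_ring_1) mpoly set"
  assumes "h \<in> ideal_gen (insert g G)"
  shows "\<exists>a r. h = a * g + r \<and> r \<in> ideal_gen G"
proof -
  define S where "S = {h. \<exists>a r. h = a * g + r \<and> r \<in> ideal_gen G}"
  have z: "0 \<in> S" unfolding S_def by (auto intro!: exI[of _ 0] ideal_gen_zero)
  have a: "x + y \<in> S" if xy: "x \<in> S" "y \<in> S" for x y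
  proof -
    obtain a1 r1 a2 r2 where "x = a1 * g + r1" "r1 \<in> ideal_gen G" "y = a2 * g + r2" "r2 \<in> ideal_gen G"
      using xy unfolding S_def by blast
    then have "x + y = (a1 + a2) * g + (r1 + r2)" "r1 + r2 \<in> ideal_gen G"
      by (simp_all add: algebra_simps ideal_gen_add)
    then show ?thesis unfolding S_def by blast
  qed
  have m: "c * x \<in> S" if xS: "x \<in> S" for c x
  proof -
    obtain a1 r1 where "x = a1 * g + r1" "r1 \<in> ideal_gen G"
      using xS unfolding S_def by blast
    then have "c * x = (c * a1) * g + c * r1" "c * r1 \<in> ideal_gen G"
      by (simp_all add: algebra_simps ideal_gen_mult)
    then show ?thesis unfolding S_def by blast
  qed
  have gg: "insert g G \<subseteq> S"
  proof
    fix x assume "x \<in> insert g G"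
    then show "x \<in> S"
    proof
      assume "x = g" then have "x = 1 * g + 0" by simp
      then show "x \<in> S" unfolding S_def using ideal_gen_zero by blast
    next
      assume "x \<in> G" then have "x = 0 * g + x" "x \<in> ideal_gen G" by (simp_all add: ideal_gen_base)
      then show "x \<in> S" unfolding S_def by blast
    qed
  qed
  have "h \<in> S" by (rule ideal_gen_minimal[OF z a m gg assms])
  then show ?thesis unfolding S_def by blast
qed




definition reg1 :: "('v, 'k::comm_ring_1) mpoly list \<Rightarrow> bool" where
  "reg1 fs \<longleftrightarrow> (\<forall>i < length fs. \<forall>g. fs ! i * g \<in> ideal_gen (set (take i fs))
                          \<longrightarrow> g \<in> ideal_gen (set (take i fs)))"

lemma sum_take_eq:
  "n \<le> length fs \<Longrightarrow> (\<Sum>k<length (take n fs). c k * take n fs ! k) = (\<Sum>k<n. c k * fs ! k)"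
  by (auto intro!: sum.cong simp: min_def)

lemma koszul:
  fixes fs :: "('v, 'k::comm_ring_1) mpoly list"
  assumes reg: "reg1 fs"
  shows "n \<le> length fs \<Longrightarrow> (\<Sum>k<n. c k * fs ! k) = 0 \<Longrightarrow> k < n \<Longrightarrow> c k \<in> ideal_gen (set (take n fs))"
proof (induction n arbitrary: c k)
  case 0 then show ?case by simp
next
  case (Suc n)
  let ?J = "ideal_gen (set (take n fs))"
  let ?J' = "ideal_gen (set (take (Suc n) fs))"
  have nl: "n < length fs" using Suc.prems by simp
  have sub: "?J \<subseteq> ?J'" by (rule ideal_gen_mono) (simp add: set_take_subset_set_take)
  have fn: "fs ! n \<in> ?J'" by (rule ideal_gen_base) (simp add: nl take_Suc_conv_app_nth)
  have s: "(\<Sum>k<n. c k * fs ! k) + c n * fs ! n = 0" using Suc.prems by simp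
  have "\<exists>c'. (\<Sum>k<n. c k * fs ! k) = (\<Sum>k<length (take n fs). c' k * take n fs ! k)"
    using sum_take_eq[of n fs c] nl by (intro exI[of _ c]) simp
  then have mem: "(\<Sum>k<n. c k * fs ! k) \<in> ?J" unfolding ideal_gen_list .
  have "c n * fs ! n = - (\<Sum>k<n. c k * fs ! k)"
    using s by (metis add.commute eq_neg_iff_add_eq_0)
  then have "fs ! n * c n = (-1) * (\<Sum>k<n. c k * fs ! k)" by (simp add: mult.commute)
  then have "fs ! n * c n \<in> ?J" using ideal_gen_mult[OF mem, of "-1"] by simp
  then have cn: "c n \<in> ?J" using reg nl unfolding reg1_def by blast
  then obtain e0 where "c n = (\<Sum>k<length (take n fs). e0 k * take n fs ! k)"
    unfolding ideal_gen_list by blast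
  then have e: "c n = (\<Sum>k<n. e0 k * fs ! k)" using sum_take_eq[of n fs e0] nl by simp
  define e where "e = e0"
  note e = e[folded e_def]
  define c' where "c' k = c k + e k * fs ! n" for k
  have "(\<Sum>k<n. c' k * fs ! k) = (\<Sum>k<n. c k * fs ! k) + fs ! n * (\<Sum>k<n. e k * fs ! k)"
    unfolding c'_def by (simp add: distrib_right sum.distrib sum_distrib_left algebra_simps)
  also have "\<dots> = 0" using s e by (simp add: mult.commute)
  finally have c'0: "(\<Sum>k<n. c' k * fs ! k) = 0" .
  show ?case
  proof (cases "k = n")
    case True then show ?thesis using cn sub by auto
  next
    case False
    then have kn: "k < n" using Suc.prems by simp
    have "c' k \<in> ?J" using Suc.IH[of c' k] c'0 kn nl by simp
    then have "c' k \<in> ?J'" using sub by blast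
    moreover have "e k * fs ! n \<in> ?J'" using fn by (simp add: ideal_gen_mult)
    ultimately have "c' k - e k * fs ! n \<in> ?J'" by (rule ideal_gen_diff)
    then show ?thesis unfolding c'_def by simp
  qed
qed

lemma core:
  fixes B :: "('v \<Rightarrow>\<^sub>0 nat) set" and fs :: "('v, 'k::comm_ring_1) mpoly list"
  assumes J: "ideal_gen (monom ` B) = ideal_gen (set fs)"
    and reg: "reg1 fs" and pB: "p \<in> B" and qB: "q \<in> B"
    and pmin: "\<And>b. b \<in> B \<Longrightarrow> mdvd b p \<Longrightarrow> b = p"
    and qmin: "\<And>b. b \<in> B \<Longrightarrow> mdvd b q \<Longrightarrow> b = q"
    and py: "Poly_Mapping.lookup p y \<ge> 1" and qy: "Poly_Mapping.lookup q y \<ge> 1"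
    and npq: "\<not> mdvd p q"
  shows False
proof -
  let ?J = "ideal_gen (set fs) :: ('v, 'k) mpoly set"
  define n where "n = length fs"
  have "(monom p :: ('v, 'k) mpoly) \<in> ?J" using J ideal_gen_base[of "monom p" "monom ` B"] pB by auto
  then obtain \<beta> where beta: "(monom p :: ('v, 'k) mpoly) = (\<Sum>k<n. \<beta> k * fs ! k)"
    unfolding ideal_gen_list n_def by blast
  have "(monom q :: ('v, 'k) mpoly) \<in> ?J" using J ideal_gen_base[of "monom q" "monom ` B"] qB by auto
  then obtain \<gamma> where gamma: "(monom q :: ('v, 'k) mpoly) = (\<Sum>k<n. \<gamma> k * fs ! k)"
    unfolding ideal_gen_list n_def by blast
  define d :: "'v \<Rightarrow>\<^sub>0 nat" where "d = Poly_Mapping.single y 1"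
  define P' where "P' = p - d"
  define Q' where "Q' = q - d"
  have pd: "P' + d = p"
    by (rule poly_mapping_eqI) (use py in \<open>auto simp: P'_def d_def lookup_add lookup_minus lookup_single when_def\<close>)
  have qd: "Q' + d = q"
    by (rule poly_mapping_eqI) (use qy in \<open>auto simp: Q'_def d_def lookup_add lookup_minus lookup_single when_def\<close>)
  define c where "c k = (monom Q' :: ('v, 'k) mpoly) * \<beta> k - monom P' * \<gamma> k" for k
  have "(\<Sum>k<n. c k * fs ! k) = (monom Q' :: ('v, 'k) mpoly) * monom p - monom P' * monom q"
    unfolding c_def beta gamma
    by (simp add: left_diff_distrib sum_subtractf sum_distrib_left mult.assoc)
  also have "\<dots> = 0"
  proof -
    have "Q' + p = P' + q" using pd qd by (metis add.commute add.left_commute)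
    then show ?thesis by (simp add: monom_def mult_single)
  qed
  finally have syz: "(\<Sum>k<n. c k * fs ! k) = 0" .
  have cJ: "c k \<in> ?J" if "k < n" for k
    using koszul[OF reg, of n c k] syz that n_def by simp
  have Bsplit: "(monom ` B :: ('v, 'k) mpoly set) = insert (monom p) (monom ` (B - {p}))"
    using pB by auto
  have "\<forall>k. \<exists>ar. k < n \<longrightarrow> fs ! k = fst ar * monom p + snd ar \<and> snd ar \<in> ideal_gen (monom ` (B - {p}))"
  proof
    fix k
    show "\<exists>ar. k < n \<longrightarrow> fs ! k = fst ar * monom p + snd ar \<and> snd ar \<in> ideal_gen (monom ` (B - {p}))"
    proof (cases "k < n")
      case True
      then have "fs ! k \<in> ?J" by (intro ideal_gen_base) (simp add: n_def)
      then have "fs ! k \<in> ideal_gen (insert (monom p) (monom ` (B - {p})))" using J Bsplit by simp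
      then obtain a r where "fs ! k = a * monom p + r" "r \<in> ideal_gen (monom ` (B - {p}))"
        using ideal_gen_split by blast
      then show ?thesis by (intro exI[of _ "(a, r)"]) simp
    qed simp
  qed
  then obtain ar where ar: "\<forall>k. k < n \<longrightarrow> fs ! k = fst (ar k) * monom p + snd (ar k) \<and> snd (ar k) \<in> ideal_gen (monom ` (B - {p}))"
    using choice[of "\<lambda>k ar. k < n \<longrightarrow> fs ! k = fst ar * monom p + snd ar \<and> snd ar \<in> ideal_gen (monom ` (B - {p}))"]
    by blast
  define \<alpha> where "\<alpha> k = fst (ar k)" for k
  define r where "r k = snd (ar k)" for k
  have fs_split: "fs ! k = \<alpha> k * monom p + r k" if "k < n" for k using ar that unfolding \<alpha>_def r_def by blast
  have rJ: "r k \<in> ideal_gen (monom ` (B - {p}))" if "k < n" for k using ar that unfolding r_def by blast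
  define E where "E = (\<Sum>k<n. c k * \<alpha> k)"
  have EJ: "E \<in> ?J" unfolding E_def
    by (rule ideal_gen_sum) (simp add: mult.commute[of "c _"] ideal_gen_mult cJ)
  define N where "N = (\<Sum>k<n. \<beta> k * \<alpha> k)"
  define M where "M = (\<Sum>k<n. \<gamma> k * \<alpha> k)"
  define R where "R = (\<Sum>k<n. \<beta> k * r k)"
  have "(monom p :: ('v, 'k) mpoly) = (\<Sum>k<n. \<beta> k * fs ! k)" by (rule beta)
  also have "\<dots> = (\<Sum>k<n. \<beta> k * (\<alpha> k * monom p + r k))"
    by (rule sum.cong) (simp_all add: fs_split)
  also have "\<dots> = N * monom p + R"
    unfolding N_def R_def by (simp add: distrib_left sum.distrib sum_distrib_right mult.assoc)
  finally have peq: "(monom p :: ('v, 'k) mpoly) = N * monom p + R" .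
  have RJ: "R \<in> ideal_gen (monom ` (B - {p}))" unfolding R_def
    by (rule ideal_gen_sum) (simp add: ideal_gen_mult rJ)
  have R0: "Poly_Mapping.lookup R p = 0"
  proof (rule ccontr)
    assume "Poly_Mapping.lookup R p \<noteq> 0"
    then have "p \<in> Poly_Mapping.keys R" by (simp add: in_keys_iff)
    then obtain b where "b \<in> B - {p}" "mdvd b p" using monomial_ideal_keys[OF RJ] by blast
    then show False using pmin by blast
  qed
  have "Poly_Mapping.lookup (N * monom p) p = Poly_Mapping.lookup N 0"
    using lookup_mult_single_right[of N p 1 0] by (simp add: monom_def)
  moreover have "Poly_Mapping.lookup (monom p :: ('v, 'k) mpoly) p = 1" by (simp add: monom_def)
  ultimately have N0: "Poly_Mapping.lookup N 0 = 1"
    using arg_cong[OF peq, of "\<lambda>f. Poly_Mapping.lookup f p"] R0 by (simp add: lookup_add)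
  have Eeq: "E = monom Q' * N - monom P' * M"
    unfolding E_def c_def N_def M_def
    by (simp add: left_diff_distrib sum_subtractf sum_distrib_left mult.assoc)
  have l1: "Poly_Mapping.lookup (monom Q' * N) Q' = 1"
    using lookup_mult_single_right[of N Q' 1 0] N0 by (simp add: monom_def mult.commute)
  have l2: "Poly_Mapping.lookup (monom P' * M) Q' = 0"
  proof (rule ccontr)
    assume "Poly_Mapping.lookup (monom P' * M) Q' \<noteq> 0"
    then have "Q' \<in> Poly_Mapping.keys (monom P' * M)" by (simp add: in_keys_iff)
    then obtain t where t: "Q' = P' + t" using keys_mult[of "monom P'" M] by (auto simp: monom_def)
    have "mdvd p q" unfolding mdvd_def
    proof
      fix v
      have "Poly_Mapping.lookup p v = Poly_Mapping.lookup P' v + Poly_Mapping.lookup d v"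
        using pd by (metis lookup_add)
      also have "\<dots> \<le> Poly_Mapping.lookup Q' v + Poly_Mapping.lookup d v" using t by (simp add: lookup_add)
      also have "\<dots> = Poly_Mapping.lookup q v" using qd by (metis lookup_add)
      finally show "Poly_Mapping.lookup p v \<le> Poly_Mapping.lookup q v" .
    qed
    then show False using npq by simp
  qed
  have "Poly_Mapping.lookup E Q' = 1" by (simp add: Eeq lookup_minus l1 l2)
  then have "Q' \<in> Poly_Mapping.keys E" by (simp add: in_keys_iff)
  then obtain b where b: "b \<in> B" "mdvd b Q'" using monomial_ideal_keys[of E B Q'] EJ J by auto
  have "mdvd b q" using b(2) qd unfolding mdvd_def by (metis lookup_add trans_le_add1)
  then have "b = q" using qmin b(1) by blast
  then have "Poly_Mapping.lookup q y \<le> Poly_Mapping.lookup Q' y" using b(2) unfolding mdvd_def by blast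
  moreover have "Poly_Mapping.lookup q y = Poly_Mapping.lookup Q' y + 1"
    using qd by (metis lookup_add lookup_single_eq d_def)
  ultimately show False by simp
qed

lemma min_gens_squarefree:
  fixes I :: "('v, 'k::comm_ring_1) mpoly set"
  assumes "squarefree_monomial_ideal I" "a \<in> min_gens I"
  shows "squarefree_exp a"
proof -
  obtain A where Asq: "\<forall>a\<in>A. squarefree_exp a" and IA: "I = ideal_gen (monom ` A)"
    using assms(1) unfolding squarefree_monomial_ideal_def by blast
  have ma: "monom a \<in> I" and amin: "\<And>b. monom b \<in> I \<Longrightarrow> mdvd b a \<Longrightarrow> b = a"
    using assms(2) unfolding min_gens_def by blast+
  have "a \<in> Poly_Mapping.keys (monom a :: ('v, 'k) mpoly)" by (simp add: monom_def)
  then obtain b where b: "b \<in> A" "mdvd b a" using monomial_ideal_keys[of "monom a" A a] ma IA by auto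
  have "monom b \<in> I" unfolding IA using b(1) by (intro ideal_gen_base) auto
  then have "b = a" using amin b(2) by blast
  then show ?thesis using b(1) Asq by blast
qed

lemma update_mdvd:
  assumes "mdvd (Poly_Mapping.update x 0 a3) (Poly_Mapping.update x 0 a1)"
    "Poly_Mapping.lookup a3 x \<le> Poly_Mapping.lookup a1 x"
  shows "mdvd a3 a1"
  using assms unfolding mdvd_def by (metis lookup_update)

theorem lemma4p1:
  fixes I :: "('v::finite, 'k::field) mpoly set"
    and a1 a2 :: "'v \<Rightarrow>\<^sub>0 nat"
  assumes "squarefree_monomial_ideal I"
    and "is_NCI I"
    and "a1 \<in> min_gens I" and "a2 \<in> min_gens I"
    and "a1 \<noteq> a2"
  shows "mdeg (mgcd a1 a2) \<le> 1"
proof (rule ccontr)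
  assume "\<not> mdeg (mgcd a1 a2) \<le> 1"
  then have deg2: "mdeg (mgcd a1 a2) \<ge> 2" by simp
  define g where "g = mgcd a1 a2"
  have sq1: "squarefree_exp a1" and sq2: "squarefree_exp a2"
    using min_gens_squarefree assms by blast+
  have lg: "Poly_Mapping.lookup g v = min (Poly_Mapping.lookup a1 v) (Poly_Mapping.lookup a2 v)" for v
    unfolding g_def mgcd_def by (subst lookup_Abs_poly_mapping) simp_all
  have le1: "Poly_Mapping.lookup g v \<le> 1" for v
    using sq1 unfolding lg squarefree_exp_def by (metis min.coboundedI1)
  have "mdeg g \<le> card (Poly_Mapping.keys g)"
    unfolding mdeg_def using le1 sum_mono[of "Poly_Mapping.keys g" "Poly_Mapping.lookup g" "\<lambda>_. 1"] by simp
  then have cg: "card (Poly_Mapping.keys g) \<ge> 2" using deg2 g_def by simp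
  then obtain x where x: "x \<in> Poly_Mapping.keys g" by fastforce
  have "card (Poly_Mapping.keys g - {x}) \<ge> 1" using cg x by simp
  then have "Poly_Mapping.keys g - {x} \<noteq> {}" by (metis card.empty not_one_le_zero)
  then obtain y where y: "y \<in> Poly_Mapping.keys g" "y \<noteq> x" by blast
  have x1: "Poly_Mapping.lookup a1 x \<ge> 1" "Poly_Mapping.lookup a2 x \<ge> 1"
    using x unfolding in_keys_iff lg by auto
  have y1: "Poly_Mapping.lookup a1 y \<ge> 1" "Poly_Mapping.lookup a2 y \<ge> 1"
    using y unfolding in_keys_iff lg by auto
  have x1': "Poly_Mapping.lookup a1 x = 1" "Poly_Mapping.lookup a2 x = 1"
    using x1 sq1 sq2 unfolding squarefree_exp_def by (metis le_antisym)+
  have xs: "x \<in> ideal_support I"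
    unfolding ideal_support_def using assms(3) x1 by (auto simp: in_keys_iff intro!: bexI[of _ a1])
  then have "is_CI (set_var_one I x)" using assms(2) unfolding is_NCI_def by blast
  then obtain fs where fs: "regular_sequence fs" "set_var_one I x = ideal_gen (set fs)"
    unfolding is_CI_def by blast
  have reg: "reg1 fs" using fs(1) unfolding regular_sequence_def reg1_def by blast
  define B where "B = (\<lambda>a. Poly_Mapping.update x 0 a) ` min_gens I"
  have J: "ideal_gen (monom ` B) = ideal_gen (set fs)"
    using fs(2) unfolding set_var_one_def B_def by (simp add: image_image)
  have mg: "monom a \<in> I" "\<And>b. monom b \<in> I \<Longrightarrow> mdvd b a \<Longrightarrow> b = a" if "a \<in> min_gens I" for a
    using that unfolding min_gens_def by blast+
  have minB: "b = Poly_Mapping.update x 0 a" if hb: "b \<in> B" "mdvd b (Poly_Mapping.update x 0 a)"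
    "a \<in> min_gens I" "Poly_Mapping.lookup a x = 1" for a b
  proof -
    obtain a3 where a3: "a3 \<in> min_gens I" "b = Poly_Mapping.update x 0 a3" using hb(1) B_def by blast
    have "Poly_Mapping.lookup a3 x \<le> 1"
      using min_gens_squarefree[OF assms(1) a3(1)] unfolding squarefree_exp_def by blast
    then have "mdvd a3 a" using update_mdvd[of x a3 a] hb(2,4) a3(2) by simp
    then have "a3 = a" using mg(2)[OF hb(3) mg(1)[OF a3(1)]] by blast
    then show ?thesis using a3 by simp
  qed
  show False
  proof (rule core[OF J reg, of "Poly_Mapping.update x 0 a1" "Poly_Mapping.update x 0 a2" y])
    show "Poly_Mapping.update x 0 a1 \<in> B" "Poly_Mapping.update x 0 a2 \<in> B"
      unfolding B_def using assms(3,4) by blast+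
    show "\<And>b. b \<in> B \<Longrightarrow> mdvd b (Poly_Mapping.update x 0 a1) \<Longrightarrow> b = Poly_Mapping.update x 0 a1"
      using minB assms(3) x1' by blast
    show "\<And>b. b \<in> B \<Longrightarrow> mdvd b (Poly_Mapping.update x 0 a2) \<Longrightarrow> b = Poly_Mapping.update x 0 a2"
      using minB assms(4) x1' by blast
    show "1 \<le> Poly_Mapping.lookup (Poly_Mapping.update x 0 a1) y"
         "1 \<le> Poly_Mapping.lookup (Poly_Mapping.update x 0 a2) y"
      using y1 y(2) by (simp_all add: lookup_update)
    show "\<not> mdvd (Poly_Mapping.update x 0 a1) (Poly_Mapping.update x 0 a2)"
    proof
      assume "mdvd (Poly_Mapping.update x 0 a1) (Poly_Mapping.update x 0 a2)"
      then have "mdvd a1 a2" using update_mdvd[of x a1 a2] x1' by simp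
      then have "a1 = a2" using mg(2)[OF assms(4) mg(1)[OF assms(3)]] by blast
      then show False using assms(5) by simp
    qed
  qed
qed

end
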